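(* Let $U_{\log}$ be the Riemann surface obtained from the universal covering of $\mathbb{P}^1\setminus\{-1,1\}$ by removing all preimages of $\infty$. Then $U_{\log}$ is conformally equivalent to $\mathbb{C}\setminus i\mathbb{Z}$, and the map $f_1\circ f_2$, where $f_2(z)=\frac{e^{\pi z}-1}{e^{\pi z}+1}$ for $z\in\mathbb{C}\setminus i\mathbb{Z}$ and $f_1(w)=\frac12(w+\frac1w)$ for $w\in\mathbb{C}\setminus\{-1,0,1\}$, is a covering map from $\mathbb{C}\setminus i\mathbb{Z}$ to $\mathbb{C}\setminus\{-1,1\}$. Moreover, for each $k\in\mathbb{Z}$: the lift of $\alpha_1$ with initial point $-\frac i2+ik$ is a curve joining $-\frac i2+ik$ with $-\frac i2+i(k+1)$, contained in the closed left half-plane, whose only points on the imaginary axis are its endpoints; the lift of $\alpha_2$ with initial point $-\frac i2+ik$ is a curve joining $-\frac i2+ik$ with $-\frac i2+i(k-1)$, contained in the closed right half-plane, whose only points on the imaginary axis are its endpoints.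
   Context: $a_1,a_2$ are the free generators of $\pi_1(\mathbb{C}\setminus\{-1,1\},0)$: $a_1$ is represented by a loop based at $0$ surrounding $-1$ once positively, $a_2$ by a loop based at $0$ surrounding $1$ once positively. $\alpha_1,\alpha_2$ are curves in $\mathbb{C}\setminus\{-1,1\}$ representing $a_1,a_2$ such that the initial and terminating point (both $0$) are the only points of the curve on the interval $(-1,1)$ and the only points of the curve on the imaginary axis. *)

theory Defs
  imports "HOL-Complex_Analysis.Complex_Analysis"
begin

definition iZ :: "complex set" where
  "iZ = {\<i> * of_int k | k. True}"

definition f2 :: "complex \<Rightarrow> complex" where
  "f2 z = (exp (of_real pi * z) - 1) / (exp (of_real pi * z) + 1)"

definition f1 :: "complex \<Rightarrow> complex" where
  "f1 w = (w + 1 / w) / 2"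

text \<open>The sphere minus {-1,1} is identified with the sphere
  minus {0,\<infinity>} via the Moebius map u \<mapsto> (u+1)/(u-1); the universal covering of the latter
  is exp : \<complex> \<rightarrow> \<complex>-{0}.  Hence the universal covering of the sphere minus {-1,1} is
  \<complex> with projection z \<mapsto> (exp z + 1)/(exp z - 1), and removing all preimages of \<infinity>
  (the points with exp z = 1) gives U_log with projection ulog_proj into \<complex>-{-1,1}.\<close>
definition U_log :: "complex set" where
  "U_log = {z. exp z \<noteq> 1}"

definition ulog_proj :: "complex \<Rightarrow> complex" where
  "ulog_proj z = (exp z + 1) / (exp z - 1)"

text \<open>Reference loops based at 0 representing the free generators a1, a2.\<close>
definition loop_a1 :: "real \<Rightarrow> complex" where
  "loop_a1 t = -1 + exp (2 * of_real pi * \<i> * of_real t)"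

definition loop_a2 :: "real \<Rightarrow> complex" where
  "loop_a2 t = 1 - exp (2 * of_real pi * \<i> * of_real t)"

definition admissible_rep :: "(real \<Rightarrow> complex) \<Rightarrow> (real \<Rightarrow> complex) \<Rightarrow> bool" where
  "admissible_rep \<alpha> c \<longleftrightarrow>
     path \<alpha> \<and> pathstart \<alpha> = 0 \<and> pathfinish \<alpha> = 0 \<and>
     path_image \<alpha> \<subseteq> - {-1, 1} \<and>
     homotopic_paths (- {-1, 1}) \<alpha> c \<and>
     (\<forall>t\<in>{0..1}. (Re (\<alpha> t) = 0 \<or> (Im (\<alpha> t) = 0 \<and> -1 < Re (\<alpha> t) \<and> Re (\<alpha> t) < 1))
        \<longrightarrow> t = 0 \<or> t = 1)"

definition is_lift :: "(real \<Rightarrow> complex) \<Rightarrow> complex \<Rightarrow> (real \<Rightarrow> complex) \<Rightarrow> bool" where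
  "is_lift \<alpha> z0 \<beta> \<longleftrightarrow> path \<beta> \<and> path_image \<beta> \<subseteq> - iZ \<and> pathstart \<beta> = z0 \<and>
     (\<forall>t\<in>{0..1}. f1 (f2 (\<beta> t)) = \<alpha> t)"

end

theory Submission
  imports Defs
begin

lemma iZ_iff: "z \<in> iZ \<longleftrightarrow> exp (of_real (2*pi) * z) = 1"
proof
  assume "z \<in> iZ"
  then obtain k where k: "z = \<i> * of_int k" by (auto simp: iZ_def)
  show "exp (of_real (2*pi) * z) = 1"
    unfolding exp_eq_1 k by (simp add: algebra_simps)
next
  assume "exp (of_real (2*pi) * z) = 1"
  then obtain n :: int where "Re z = 0" "2*pi* Im z = of_int (2*n) * pi"
    unfolding exp_eq_1 by auto
  then have "Re z = 0" "Im z = of_int n" by auto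
  then have "z = \<i> * of_int n" by (simp add: complex_eq_iff)
  then show "z \<in> iZ" by (auto simp: iZ_def)
qed

lemma f12_eq:
  assumes "z \<notin> iZ"
  shows "f1 (f2 z) = ulog_proj (of_real (2*pi) * z)"
proof -
  define E where "E = exp (of_real pi * z)"
  have E2: "exp (of_real (2*pi) * z) = E * E"
    unfolding E_def by (simp flip: exp_add add: algebra_simps)
  have "E * E \<noteq> 1" using assms E2 iZ_iff by auto
  then have n1: "E \<noteq> 1" "E \<noteq> -1" "E + 1 \<noteq> 0" "E - 1 \<noteq> 0" "E*E - 1 \<noteq> 0"
    by (auto simp: add_eq_0_iff) (metis minus_equation_iff mult_minus_left mult_minus_right mult_1_right)
  show ?thesis unfolding f1_def f2_def ulog_proj_def E2 E_def[symmetric] using n1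
    by (simp add: field_simps)
qed


lemma homeomorphism_cong':
  assumes h: "homeomorphism S T f g" and e: "\<And>x. x \<in> S \<Longrightarrow> f x = f' x"
  shows "homeomorphism S T f' g"
proof -
  have i: "f' ` S = f ` S" by (rule image_cong) (auto simp: e)
  have c: "continuous_on S f' = continuous_on S f" by (rule continuous_on_cong) (auto simp: e)
  have "\<forall>y\<in>T. f' (g y) = y"
  proof
    fix y assume "y \<in> T"
    then have "g y \<in> S" using homeomorphism_image2[OF h] by blast
    then show "f' (g y) = y" using e[of "g y"] h \<open>y \<in> T\<close> by (simp add: homeomorphism_def)
  qed
  then show ?thesis using h unfolding homeomorphism_def i c by (simp add: e)
qed

lemma cov_restrict:
  assumes cov: "covering_space c p S" and T: "openin (top_of_set S) T"
  shows "covering_space (c \<inter> p -` T) p T"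
proof
  have cont: "continuous_on c p" and im: "p ` c = S"
    using cov by (auto simp: covering_space_def)
  show "continuous_on (c \<inter> p -` T) p" using cont by (rule continuous_on_subset) (rule Int_lower1)
  have TS: "T \<subseteq> S" using T by (rule openin_imp_subset)
  then show "p ` (c \<inter> p -` T) = T" using im by blast
  fix x assume "x \<in> T"
  then have "x \<in> S" using TS by blast
  then obtain U v where U: "x \<in> U" "openin (top_of_set S) U" and v: "\<Union>v = c \<inter> p -` U"
      "\<forall>u \<in> v. openin (top_of_set c) u" "pairwise disjnt v"
      "\<forall>u \<in> v. \<exists>q. homeomorphism u U p q"
    using cov unfolding covering_space_def by metis
  have pT: "openin (top_of_set c) (c \<inter> p -` T)"
    using continuous_openin_preimage[OF cont _ T] im by blast
  show "\<exists>T'. x \<in> T' \<and> openin (top_of_set T) T' \<and>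
          (\<exists>v. \<Union>v = (c \<inter> p -` T) \<inter> p -` T' \<and> (\<forall>u \<in> v. openin (top_of_set (c \<inter> p -` T)) u) \<and>
          pairwise disjnt v \<and> (\<forall>u \<in> v. \<exists>q. homeomorphism u T' p q))"
  proof (intro exI conjI)
    show "x \<in> U \<inter> T" using U \<open>x \<in> T\<close> by blast
    have "openin (top_of_set S) (U \<inter> T)" using U(2) T by (rule openin_Int)
    then show "openin (top_of_set T) (U \<inter> T)"
      by (rule openin_subset_trans) (use TS in blast)+
    have "\<Union>((\<lambda>u. u \<inter> p -` T) ` v) = (\<Union>v) \<inter> p -` T" by auto
    then show "\<Union>((\<lambda>u. u \<inter> p -` T) ` v) = (c \<inter> p -` T) \<inter> p -` (U \<inter> T)"
      using v(1) by auto
    show "\<forall>u \<in> (\<lambda>u. u \<inter> p -` T) ` v. openin (top_of_set (c \<inter> p -` T)) u"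
    proof
      fix u' assume "u' \<in> (\<lambda>u. u \<inter> p -` T) ` v"
      then obtain u where u: "u \<in> v" "u' = u \<inter> p -` T" by blast
      have "u \<subseteq> c" using u v(1) by blast
      have "openin (top_of_set c) (u \<inter> (c \<inter> p -` T))"
        using v(2) u pT by (simp add: openin_Int)
      moreover have "u \<inter> (c \<inter> p -` T) = u'" using u \<open>u \<subseteq> c\<close> by blast
      ultimately have "openin (top_of_set c) u'" by simp
      then show "openin (top_of_set (c \<inter> p -` T)) u'"
        by (rule openin_subset_trans) (use u \<open>u \<subseteq> c\<close> in blast)+
    qed
    show "pairwise disjnt ((\<lambda>u. u \<inter> p -` T) ` v)"
      using v(3) unfolding pairwise_def disjnt_def by blast
    show "\<forall>u \<in> (\<lambda>u. u \<inter> p -` T) ` v. \<exists>q. homeomorphism u (U \<inter> T) p q"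
    proof
      fix u' assume "u' \<in> (\<lambda>u. u \<inter> p -` T) ` v"
      then obtain u where u: "u \<in> v" "u' = u \<inter> p -` T" by blast
      then obtain q where q: "homeomorphism u U p q" using v(4) by blast
      have "p ` u' = U \<inter> T"
        using homeomorphism_image1[OF q] u by blast
      then have "homeomorphism u' (U \<inter> T) p q"
        by (rule homeomorphism_of_subsets[OF q, of _ U, rotated 2]) (use u in blast)+
      then show "\<exists>q. homeomorphism u' (U \<inter> T) p q" by blast
    qed
  qed
qed

lemma cov_transform:
  assumes cov: "covering_space c p S" and hk: "homeomorphism c' c k k'"
    and hh: "homeomorphism S S' h h'" and e: "\<And>x. x \<in> c' \<Longrightarrow> p' x = h (p (k x))"
  shows "covering_space c' p' S'"
proof
  have cont: "continuous_on c p" and im: "p ` c = S"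
    using cov by (auto simp: covering_space_def)
  have kc: "k ` c' = c" using hk by (rule homeomorphism_image1)
  have hS: "h ` S = S'" using hh by (rule homeomorphism_image1)
  have pk: "(\<lambda>x. p (k x)) ` c' = S" by (metis image_image kc im)
  have "continuous_on c' (h \<circ> (p \<circ> k))"
    by (intro continuous_on_compose homeomorphism_cont1[OF hk] homeomorphism_cont1[OF hh])
       (simp_all add: kc im cont pk homeomorphism_cont1[OF hh])
  moreover have "continuous_on c' p' = continuous_on c' (h \<circ> (p \<circ> k))"
    by (rule continuous_on_cong) (simp_all add: e)
  ultimately show "continuous_on c' p'" by simp
  have "p' ` c' = (h \<circ> (p \<circ> k)) ` c'" by (rule image_cong) (simp_all add: e)
  also have "\<dots> = h ` S" unfolding pk[symmetric] image_image o_def by (rule refl)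
  also have "\<dots> = S'" by (rule hS)
  finally show "p' ` c' = S'" .
  fix x assume "x \<in> S'"
  then have hx: "h' x \<in> S" "h (h' x) = x"
    using homeomorphism_image2[OF hh] homeomorphism_apply2[OF hh] by blast+
  then obtain U v where U: "h' x \<in> U" "openin (top_of_set S) U" and v: "\<Union>v = c \<inter> p -` U"
      "\<forall>u \<in> v. openin (top_of_set c) u" "pairwise disjnt v"
      "\<forall>u \<in> v. \<exists>q. homeomorphism u U p q"
    using cov unfolding covering_space_def by metis
  have US: "U \<subseteq> S" using U(2) by (rule openin_imp_subset)
  have hinj: "inj_on h S" using hh by (metis homeomorphism_apply1 inj_on_inverseI)
  have kinj: "inj_on k' c" using hk by (metis homeomorphism_apply2 inj_on_inverseI)
  show "\<exists>T'. x \<in> T' \<and> openin (top_of_set S') T' \<and>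
          (\<exists>v. \<Union>v = c' \<inter> p' -` T' \<and> (\<forall>u \<in> v. openin (top_of_set c') u) \<and>
          pairwise disjnt v \<and> (\<forall>u \<in> v. \<exists>q. homeomorphism u T' p' q))"
  proof (intro exI conjI)
    show "x \<in> h ` U" using hx U by (metis imageI)
    show "openin (top_of_set S') (h ` U)" using hh U(2) by (rule homeomorphism_imp_open_map)
    show "\<Union>((`) k' ` v) = c' \<inter> p' -` (h ` U)"
    proof
      show "\<Union>((`) k' ` v) \<subseteq> c' \<inter> p' -` (h ` U)"
      proof
        fix z assume "z \<in> \<Union>((`) k' ` v)"
        then obtain u w where uw: "u \<in> v" "w \<in> u" "z = k' w" by blast
        then have w: "w \<in> c" "p w \<in> U" using v(1) by blast+
        have "z \<in> c'" using uw w homeomorphism_image2[OF hk] by blast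
        moreover have "k z = w" using uw w homeomorphism_apply2[OF hk] by blast
        ultimately show "z \<in> c' \<inter> p' -` (h ` U)" using e w by auto
      qed
      show "c' \<inter> p' -` (h ` U) \<subseteq> \<Union>((`) k' ` v)"
      proof
        fix z assume z: "z \<in> c' \<inter> p' -` (h ` U)"
        then obtain y where y: "y \<in> U" "h (p (k z)) = h y" using e by auto
        have kz: "k z \<in> c" using z kc by blast
        then have "p (k z) \<in> S" using im by blast
        then have "p (k z) = y" using y US hinj by (meson inj_onD subsetD)
        then have "k z \<in> \<Union>v" using v(1) kz y by blast
        then obtain u where "u \<in> v" "k z \<in> u" by blast
        moreover have "k' (k z) = z" using z homeomorphism_apply1[OF hk] by blast
        ultimately show "z \<in> \<Union>((`) k' ` v)" by (metis UnionI imageI)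
      qed
    qed
    show "\<forall>u \<in> (`) k' ` v. openin (top_of_set c') u"
    proof
      fix u' assume "u' \<in> (`) k' ` v"
      then obtain u where u: "u \<in> v" "u' = k' ` u" by blast
      show "openin (top_of_set c') u'"
        unfolding u(2) using v(2) u(1) by (intro homeomorphism_imp_open_map[OF homeomorphism_symD[OF hk]]) simp
    qed
    show "pairwise disjnt ((`) k' ` v)"
      unfolding pairwise_def
    proof (intro ballI impI)
      fix a b assume ab: "a \<in> (`) k' ` v" "b \<in> (`) k' ` v" "a \<noteq> b"
      then obtain u1 u2 where u: "u1 \<in> v" "u2 \<in> v" "a = k' ` u1" "b = k' ` u2" by blast
      then have "u1 \<noteq> u2" using ab by blast
      then have "disjnt u1 u2" using v(3) u unfolding pairwise_def by blast
      moreover have "u1 \<subseteq> c" "u2 \<subseteq> c" using u v(1) by blast+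
      ultimately show "disjnt a b" unfolding u disjnt_def using kinj
        by (metis inj_on_image_Int inj_on_subset image_empty le_sup_iff Un_absorb)
    qed
    show "\<forall>u \<in> (`) k' ` v. \<exists>q. homeomorphism u (h ` U) p' q"
    proof
      fix u' assume "u' \<in> (`) k' ` v"
      then obtain u where u: "u \<in> v" "u' = k' ` u" by blast
      then obtain q where q: "homeomorphism u U p q" using v(4) by blast
      have uc: "u \<subseteq> c" using u v(1) by blast
      have "homeomorphism c c' k' k" using hk by (rule homeomorphism_symD)
      then have h1: "homeomorphism u u' k' k"
        by (rule homeomorphism_of_subsets) (use uc u in auto)
      have h2: "homeomorphism U (h ` U) h h'"
        by (rule homeomorphism_of_subsets[OF hh US]) auto
      have "homeomorphism u' (h ` U) (h \<circ> (p \<circ> k)) ((k' \<circ> q) \<circ> h')"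
        by (rule homeomorphism_compose[OF homeomorphism_compose[OF homeomorphism_symD[OF h1] q] h2])
      then have "homeomorphism u' (h ` U) p' ((k' \<circ> q) \<circ> h')"
      proof (rule homeomorphism_cong')
        fix z assume "z \<in> u'"
        then have "z \<in> c'" using u uc homeomorphism_image2[OF hk] by blast
        then show "(h \<circ> (p \<circ> k)) z = p' z" by (simp add: e)
      qed
      then show "\<exists>q. homeomorphism u' (h ` U) p' q" by blast
    qed
  qed
qed

lemma homeo_scale: "homeomorphism (- iZ) (UNIV \<inter> exp -` (- {0, 1})) (\<lambda>z. of_real (2*pi) * z) (\<lambda>w::complex. w / of_real (2*pi))"
proof (rule homeomorphismI)
  show "continuous_on (- iZ) (\<lambda>z. of_real (2*pi) * z)" by (intro continuous_intros)
  show "continuous_on (UNIV \<inter> exp -` (- {0, 1})) (\<lambda>w::complex. w / of_real (2*pi))" by (intro continuous_intros) auto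
  show "(\<lambda>z. of_real (2*pi) * z) ` (- iZ) \<subseteq> UNIV \<inter> exp -` (- {0, 1})"
    using iZ_iff by auto
  show "(\<lambda>w::complex. w / of_real (2*pi)) ` (UNIV \<inter> exp -` (- {0, 1})) \<subseteq> - iZ"
  proof
    fix y assume "y \<in> (\<lambda>w::complex. w / of_real (2*pi)) ` (UNIV \<inter> exp -` (- {0, 1}))"
    then obtain w where w: "exp w \<noteq> 1" "y = w / of_real (2*pi)" by auto
    have "of_real (2*pi) * y = w" using w(2) by simp
    then show "y \<in> - iZ" using iZ_iff w(1) by auto
  qed
qed auto

lemma homeo_M: "homeomorphism (- {0, 1}) (- {-1, 1}) (\<lambda>s::complex. (s+1)/(s-1)) (\<lambda>s. (s+1)/(s-1))"
proof (rule homeomorphismI)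
  show "continuous_on (- {0, 1}) (\<lambda>s::complex. (s+1)/(s-1))"
    by (intro continuous_intros) auto
  show "continuous_on (- {-1, 1}) (\<lambda>s::complex. (s+1)/(s-1))"
    by (intro continuous_intros) auto
  have inv: "((s+1)/(s-1) + 1) / ((s+1)/(s-1) - 1) = s" if "s \<noteq> 1" for s :: complex
    using that by (simp add: field_simps)
  have a: "(s+1)/(s-1) \<noteq> -1 \<and> (s+1)/(s-1) \<noteq> 1" if "s \<noteq> 0" "s \<noteq> 1" for s :: complex
  proof -
    have "s - 1 \<noteq> 0" using that by simp
    then show ?thesis using that by (simp add: field_simps)
  qed
  show "(\<lambda>s::complex. (s+1)/(s-1)) ` (- {0, 1}) \<subseteq> - {-1, 1}"
    using a by auto
  have b: "(s+1)/(s-1) \<noteq> 0 \<and> (s+1)/(s-1) \<noteq> 1" if "s \<noteq> -1" "s \<noteq> 1" for s :: complex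
  proof -
    have "s - 1 \<noteq> 0" using that by simp
    have "s + 1 \<noteq> 0" using that(1) by (metis eq_neg_iff_add_eq_0)
    then show ?thesis using \<open>s - 1 \<noteq> 0\<close> by (simp add: field_simps)
  qed
  show "(\<lambda>s::complex. (s+1)/(s-1)) ` (- {-1, 1}) \<subseteq> - {0, 1}"
    using b by auto
qed (auto simp: field_simps)

lemma cov_main: "covering_space (- iZ) (\<lambda>z. f1 (f2 z)) (- {-1, 1})"
proof (rule cov_transform[OF _ homeo_scale homeo_M])
  have oo: "openin (top_of_set (- {0::complex})) (- {0, 1})"
    by (subst openin_open_eq) (auto intro: open_Compl)
  show "covering_space (UNIV \<inter> exp -` (- {0, 1})) (exp::complex\<Rightarrow>complex) (- {0, 1})"
    using cov_restrict[OF covering_space_exp_punctured_plane oo] by simp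
  fix z assume "z \<in> - iZ"
  then show "f1 (f2 z) = (exp (of_real (2*pi) * z) + 1) / (exp (of_real (2*pi) * z) - 1)"
    using f12_eq by (simp add: ulog_proj_def)
qed

lemma part1: "\<exists>\<phi>. \<phi> holomorphic_on (- iZ) \<and> bij_betw \<phi> (- iZ) U_log \<and>
          inv_into (- iZ) \<phi> holomorphic_on U_log \<and>
          (\<forall>z\<in>- iZ. ulog_proj (\<phi> z) = f1 (f2 z))"
proof (intro exI conjI)
  let ?\<phi> = "\<lambda>z::complex. of_real (2*pi) * z"
  show "?\<phi> holomorphic_on (- iZ)" by (intro holomorphic_intros)
  have inj: "inj_on ?\<phi> (- iZ)" by (auto simp: inj_on_def)
  have U: "U_log = UNIV \<inter> exp -` (- {0, 1})" by (auto simp: U_log_def)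
  have im: "?\<phi> ` (- iZ) = U_log" unfolding U by (rule homeomorphism_image1[OF homeo_scale])
  show "bij_betw ?\<phi> (- iZ) U_log" using inj im by (simp add: bij_betw_def)
  have "inv_into (- iZ) ?\<phi> w = w / of_real (2*pi)" if "w \<in> U_log" for w
  proof (rule inv_into_f_eq[OF inj])
    show "w / of_real (2*pi) \<in> - iZ"
      using homeomorphism_image2[OF homeo_scale] that U by blast
  qed simp
  moreover have "(\<lambda>w::complex. w / of_real (2*pi)) holomorphic_on U_log" by (intro holomorphic_intros) simp
  ultimately show "inv_into (- iZ) ?\<phi> holomorphic_on U_log"
    by (metis (no_types, lifting) holomorphic_transform)
  show "\<forall>z\<in>- iZ. ulog_proj (?\<phi> z) = f1 (f2 z)" using f12_eq by simp
qed

lemma logc: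
  fixes q1 q2 :: "real \<Rightarrow> complex"
  assumes "continuous_on {0..1} q1" "continuous_on {0..1} q2"
    and e: "\<And>t. t \<in> {0..1} \<Longrightarrow> exp (q1 t) = exp (q2 t)"
  shows "q1 1 - q1 0 = q2 1 - q2 0"
proof -
  have "(\<lambda>t. q1 t - q2 t) constant_on {0..1}"
  proof (rule continuous_discrete_range_constant)
    show "connected {0..1::real}" by simp
    show "continuous_on {0..1} (\<lambda>t. q1 t - q2 t)" using assms by (intro continuous_intros)
    fix x assume x: "x \<in> {0..1::real}"
    show "\<exists>e>0. \<forall>y. y \<in> {0..1} \<and> q1 y - q2 y \<noteq> q1 x - q2 x \<longrightarrow> e \<le> cmod (q1 y - q2 y - (q1 x - q2 x))"
    proof (intro exI conjI allI impI)
      fix y assume y: "y \<in> {0..1} \<and> q1 y - q2 y \<noteq> q1 x - q2 x"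
      have "exp (q1 y - q2 y) = exp (q1 x - q2 x)"
        using e[of x] e[of y] x y by (simp add: exp_diff)
      then obtain n :: int where n: "q1 y - q2 y = q1 x - q2 x + of_int (2 * n) * pi * \<i>"
        unfolding exp_eq by blast
      then have "n \<noteq> 0" using y by auto
      then have "1 \<le> \<bar>real_of_int n\<bar>" by linarith
      have "cmod (q1 y - q2 y - (q1 x - q2 x)) = cmod (of_int (2 * n) * pi * \<i>)" using n by simp
      also have "\<dots> = 2 * pi * \<bar>real_of_int n\<bar>" by (simp add: norm_mult abs_mult)
      also have "\<dots> \<ge> 2 * pi * 1" using \<open>1 \<le> \<bar>real_of_int n\<bar>\<close> by (intro mult_left_mono) auto
      finally show "1 \<le> cmod (q1 y - q2 y - (q1 x - q2 x))" using pi_ge_two by linarith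
    qed simp
  qed
  then obtain c where "\<And>t. t \<in> {0..1} \<Longrightarrow> q1 t - q2 t = c" by (auto simp: constant_on_def)
  from this[of 0] this[of 1] show ?thesis by (simp add: algebra_simps)
qed

lemma logw:
  assumes p: "path p" and z: "\<zeta> \<notin> path_image p" and q: "continuous_on {0..1} q"
    and e: "\<And>t. t \<in> {0..1} \<Longrightarrow> p t = \<zeta> + exp (q t)"
  shows "q 1 - q 0 = 2 * of_real pi * \<i> * winding_number p \<zeta>"
proof -
  obtain q' where q': "path q'" "pathfinish q' - pathstart q' = 2 * of_real pi * \<i> * winding_number p \<zeta>"
     "\<And>t. t \<in> {0..1} \<Longrightarrow> p t = \<zeta> + exp(q' t)"
    using winding_number_as_continuous_log[OF p z] by metis
  have "q 1 - q 0 = q' 1 - q' 0"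
    by (rule logc[OF q]) (use q' e path_def in auto)
  then show ?thesis using q'(2) by (simp add: pathstart_def pathfinish_def)
qed

lemma path_loop_a1: "path loop_a1"
  unfolding path_def loop_a1_def by (intro continuous_intros)
lemma path_loop_a2: "path loop_a2"
  unfolding path_def loop_a2_def by (intro continuous_intros)

lemma wn_a1: "winding_number loop_a1 (-1) = 1" "winding_number loop_a1 1 = 0"
proof -
  have nz: "-1 \<notin> path_image loop_a1"
    by (auto simp: path_image_def loop_a1_def)
  have "(\<lambda>t. 2 * of_real pi * \<i> * of_real t) 1 - (\<lambda>t. 2 * of_real pi * \<i> * of_real t) 0
        = 2 * of_real pi * \<i> * winding_number loop_a1 (-1)"
    by (rule logw[OF path_loop_a1 nz]) (auto intro!: continuous_intros simp: loop_a1_def)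
  then show "winding_number loop_a1 (-1) = 1" by simp
  show "winding_number loop_a1 1 = 0"
  proof (rule winding_number_zero_outside[OF path_loop_a1 convex_cball[of "-1" 1]])
    show "pathfinish loop_a1 = pathstart loop_a1"
      by (simp add: loop_a1_def pathfinish_def pathstart_def)
    show "(1::complex) \<notin> cball (-1) 1" by (simp add: dist_norm)
    show "path_image loop_a1 \<subseteq> cball (-1) 1"
      by (auto simp: path_image_def loop_a1_def dist_norm)
  qed
qed

lemma wn_a2: "winding_number loop_a2 1 = 1" "winding_number loop_a2 (-1) = 0"
proof -
  have nz: "1 \<notin> path_image loop_a2"
    by (auto simp: path_image_def loop_a2_def)
  have "(\<lambda>t. 2 * of_real pi * \<i> * of_real t + of_real pi * \<i>) 1 - (\<lambda>t. 2 * of_real pi * \<i> * of_real t + of_real pi * \<i>) 0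
        = 2 * of_real pi * \<i> * winding_number loop_a2 1"
    by (rule logw[OF path_loop_a2 nz]) (auto intro!: continuous_intros simp: loop_a2_def exp_add)
  then show "winding_number loop_a2 1 = 1" by simp
  show "winding_number loop_a2 (-1) = 0"
  proof (rule winding_number_zero_outside[OF path_loop_a2 convex_cball[of "1" 1]])
    show "pathfinish loop_a2 = pathstart loop_a2"
      by (simp add: loop_a2_def pathfinish_def pathstart_def)
    show "(-1::complex) \<notin> cball 1 1" by (simp add: dist_norm)
    show "path_image loop_a2 \<subseteq> cball 1 1"
      by (auto simp: path_image_def loop_a2_def dist_norm)
  qed
qed

lemma key:
  assumes "z \<notin> iZ"
  shows "f1 (f2 z) = a \<longleftrightarrow> exp (of_real (2*pi) * z) * (a - 1) = a + 1"
proof -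
  define E where "E = exp (of_real (2*pi) * z)"
  have "E \<noteq> 1" using assms iZ_iff E_def by auto
  then have "E - 1 \<noteq> 0" by simp
  have eq: "f1 (f2 z) = (E + 1) / (E - 1)" using f12_eq[OF assms] by (simp add: ulog_proj_def E_def)
  have "(E + 1) / (E - 1) = a \<longleftrightarrow> E + 1 = a * (E - 1)"
    using \<open>E - 1 \<noteq> 0\<close> by (simp add: divide_eq_eq)
  also have "\<dots> \<longleftrightarrow> E * (a - 1) = a + 1" by (auto simp: algebra_simps)
  finally show ?thesis unfolding eq E_def .
qed

lemma key2:
  assumes "exp (of_real (2*pi) * z) * (a - 1) = a + 1"
  shows "z \<notin> iZ"
proof
  assume "z \<in> iZ"
  then have "exp (of_real (2*pi) * z) = 1" using iZ_iff by auto
  then show False using assms by simp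
qed

lemma re_rel:
  assumes e: "exp (of_real (2*pi) * z) * (a - 1) = a + 1" and a: "a \<noteq> 1"
  shows "(Re z \<le> 0 \<longleftrightarrow> Re a \<le> 0) \<and> (Re z = 0 \<longleftrightarrow> Re a = 0)"
proof -
  define r where "r = exp (2 * pi * Re z)"
  have r: "r * cmod (a - 1) = cmod (a + 1)"
    using arg_cong[OF e, of norm] by (simp add: norm_mult r_def)
  have pos: "cmod (a - 1) > 0" using a by simp
  have sq: "cmod (a + 1) ^ 2 - cmod (a - 1) ^ 2 = 4 * Re a"
    unfolding cmod_power2 by (simp add: power2_eq_square algebra_simps)
  have "Re z \<le> 0 \<longleftrightarrow> r \<le> 1" by (simp add: r_def mult_le_0_iff) (smt (verit) pi_gt_zero)
  also have "\<dots> \<longleftrightarrow> cmod (a + 1) \<le> cmod (a - 1)"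
    using mult_le_cancel_right_pos[OF pos, of r 1] r by simp
  also have "\<dots> \<longleftrightarrow> cmod (a + 1) ^ 2 \<le> cmod (a - 1) ^ 2"
    by (simp add: power_mono_iff)
  also have "\<dots> \<longleftrightarrow> Re a \<le> 0" using sq by linarith
  finally have 1: "Re z \<le> 0 \<longleftrightarrow> Re a \<le> 0" .
  have "Re z = 0 \<longleftrightarrow> r = 1" by (simp add: r_def)
  also have "\<dots> \<longleftrightarrow> cmod (a + 1) = cmod (a - 1)"
    using pos r by auto
  also have "\<dots> \<longleftrightarrow> cmod (a + 1) ^ 2 = cmod (a - 1) ^ 2"
    by (simp add: power2_eq_iff_nonneg)
  also have "\<dots> \<longleftrightarrow> Re a = 0" using sq by linarith
  finally show ?thesis using 1 by blast
qed

lemma half_left: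
  assumes p: "path \<alpha>" and s: "\<alpha> 0 = 0" "\<alpha> 1 = 0"
    and ax: "\<And>t. t \<in> {0<..<1} \<Longrightarrow> Re (\<alpha> t) \<noteq> 0"
    and w: "winding_number \<alpha> w \<noteq> 0" "Re w < 0"
  shows "\<forall>t\<in>{0..1}. Re (\<alpha> t) \<le> 0"
proof (rule ccontr)
  assume "\<not> ?thesis"
  then obtain t0 where t0: "t0 \<in> {0..1}" "Re (\<alpha> t0) > 0" by force
  have cont: "continuous_on {0..1} (\<lambda>t. Re (\<alpha> t))"
    using p unfolding path_def by (intro continuous_intros)
  have ge: "Re (\<alpha> t) \<ge> 0" if t: "t \<in> {0..1}" for t
  proof (rule ccontr)
    assume "\<not> Re (\<alpha> t) \<ge> 0"
    then have neg: "Re (\<alpha> t) < 0" by simp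
    define a where "a = min t t0"
    define b where "b = max t t0"
    have ab: "0 \<le> a" "a \<le> b" "b \<le> 1" using t t0 by (auto simp: a_def b_def)
    have cab: "continuous_on {a..b} (\<lambda>t. Re (\<alpha> t))"
      by (rule continuous_on_subset[OF cont]) (use ab in auto)
    have "\<exists>x. a \<le> x \<and> x \<le> b \<and> Re (\<alpha> x) = 0"
    proof (cases "t \<le> t0")
      case True
      then show ?thesis using IVT'[OF _ _ _ cab, of 0] neg t0 ab by (simp add: a_def b_def)
    next
      case False
      then show ?thesis using IVT2'[OF _ _ _ cab, of 0] neg t0 ab by (simp add: a_def b_def)
    qed
    then obtain x where x: "a \<le> x" "x \<le> b" "Re (\<alpha> x) = 0" by blast
    have "x \<noteq> 0" "x \<noteq> 1"
      using x neg t0 t s by (auto simp: a_def b_def min_def max_def split: if_splits)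
    then have "x \<in> {0<..<1}" using x ab by auto
    then show False using ax x by blast
  qed
  have "winding_number \<alpha> w = 0"
  proof (rule winding_number_zero_outside[OF p convex_halfspace_Re_ge[of 0]])
    show "pathfinish \<alpha> = pathstart \<alpha>" using s by (simp add: pathfinish_def pathstart_def)
    show "w \<notin> {x. 0 \<le> Re x}" using w by simp
    show "path_image \<alpha> \<subseteq> {x. 0 \<le> Re x}" using ge by (auto simp: path_image_def)
  qed
  then show False using w by simp
qed

lemma half_right:
  assumes p: "path \<alpha>" and s: "\<alpha> 0 = 0" "\<alpha> 1 = 0"
    and ax: "\<And>t. t \<in> {0<..<1} \<Longrightarrow> Re (\<alpha> t) \<noteq> 0"
    and w: "winding_number \<alpha> w \<noteq> 0" "Re w > 0"
  shows "\<forall>t\<in>{0..1}. Re (\<alpha> t) \<ge> 0"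
proof (rule ccontr)
  assume "\<not> ?thesis"
  then obtain t0 where t0: "t0 \<in> {0..1}" "Re (\<alpha> t0) < 0" by force
  have cont: "continuous_on {0..1} (\<lambda>t. Re (\<alpha> t))"
    using p unfolding path_def by (intro continuous_intros)
  have ge: "Re (\<alpha> t) \<le> 0" if t: "t \<in> {0..1}" for t
  proof (rule ccontr)
    assume "\<not> Re (\<alpha> t) \<le> 0"
    then have neg: "Re (\<alpha> t) > 0" by simp
    define a where "a = min t t0"
    define b where "b = max t t0"
    have ab: "0 \<le> a" "a \<le> b" "b \<le> 1" using t t0 by (auto simp: a_def b_def)
    have cab: "continuous_on {a..b} (\<lambda>t. Re (\<alpha> t))"
      by (rule continuous_on_subset[OF cont]) (use ab in auto)
    have "\<exists>x. a \<le> x \<and> x \<le> b \<and> Re (\<alpha> x) = 0"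
    proof (cases "t \<le> t0")
      case True
      then show ?thesis using IVT2'[OF _ _ _ cab, of 0] neg t0 ab by (simp add: a_def b_def)
    next
      case False
      then show ?thesis using IVT'[OF _ _ _ cab, of 0] neg t0 ab by (simp add: a_def b_def)
    qed
    then obtain x where x: "a \<le> x" "x \<le> b" "Re (\<alpha> x) = 0" by blast
    have "x \<noteq> 0" "x \<noteq> 1"
      using x neg t0 t s by (auto simp: a_def b_def min_def max_def split: if_splits)
    then have "x \<in> {0<..<1}" using x ab by auto
    then show False using ax x by blast
  qed
  have "winding_number \<alpha> w = 0"
  proof (rule winding_number_zero_outside[OF p convex_halfspace_Re_le[of 0]])
    show "pathfinish \<alpha> = pathstart \<alpha>" using s by (simp add: pathfinish_def pathstart_def)
    show "w \<notin> {x. Re x \<le> 0}" using w by simp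
    show "path_image \<alpha> \<subseteq> {x. Re x \<le> 0}" using ge by (auto simp: path_image_def)
  qed
  then show False using w by simp
qed

lemma lift_main:
  fixes \<alpha> :: "real \<Rightarrow> complex" and k :: int
  assumes p: "path \<alpha>" and s: "\<alpha> 0 = 0" and im: "path_image \<alpha> \<subseteq> - {-1, 1}"
  shows "(\<exists>\<beta>. is_lift \<alpha> (- \<i>/2 + \<i> * of_int k) \<beta>) \<and>
    (\<forall>\<beta>. is_lift \<alpha> (- \<i>/2 + \<i> * of_int k) \<beta> \<longrightarrow>
       pathfinish \<beta> = (- \<i>/2 + \<i> * of_int k) + \<i> * (winding_number \<alpha> (-1) - winding_number \<alpha> 1) \<and>
       (\<forall>t\<in>{0..1}. (Re (\<beta> t) \<le> 0 \<longleftrightarrow> Re (\<alpha> t) \<le> 0) \<and> (Re (\<beta> t) = 0 \<longleftrightarrow> Re (\<alpha> t) = 0)))"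
proof -
  define z0 where "z0 = - \<i>/2 + \<i> * (of_int k :: complex)"
  have nm1: "-1 \<notin> path_image \<alpha>" and n1: "1 \<notin> path_image \<alpha>" using im by auto
  have ane: "\<alpha> t \<noteq> 1" "\<alpha> t - 1 \<noteq> 0" if "t \<in> {0..1}" for t
    using n1 that by (auto simp: path_image_def)
  obtain qa where qa: "path qa" "pathfinish qa - pathstart qa = 2 * of_real pi * \<i> * winding_number \<alpha> (-1)"
     "\<And>t. t \<in> {0..1} \<Longrightarrow> \<alpha> t = -1 + exp(qa t)"
    using winding_number_as_continuous_log[OF p nm1] by metis
  obtain qb where qb: "path qb" "pathfinish qb - pathstart qb = 2 * of_real pi * \<i> * winding_number \<alpha> 1"
     "\<And>t. t \<in> {0..1} \<Longrightarrow> \<alpha> t = 1 + exp(qb t)"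
    using winding_number_as_continuous_log[OF p n1] by metis
  define Q where "Q t = qa t - qb t" for t
  have cQ: "continuous_on {0..1} Q" unfolding Q_def using qa(1) qb(1) unfolding path_def
    by (intro continuous_intros)
  have expQ: "exp (Q t) * (\<alpha> t - 1) = \<alpha> t + 1" if t: "t \<in> {0..1}" for t
  proof -
    have "exp (qa t) = \<alpha> t + 1" "exp (qb t) = \<alpha> t - 1" using qa(3)[OF t] qb(3)[OF t] by simp_all
    then show ?thesis using ane[OF t] by (simp add: Q_def exp_diff)
  qed
  have Qdiff: "Q 1 - Q 0 = 2 * of_real pi * \<i> * (winding_number \<alpha> (-1) - winding_number \<alpha> 1)"
    using qa(2) qb(2) by (simp add: Q_def pathstart_def pathfinish_def algebra_simps)
  have eQ0: "exp (Q 0) = -1" using expQ[of 0] s by (simp add: minus_equation_iff)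
  have eqz: "of_real (2*pi) * z0 = ((2 * of_int (k-1) + 1) * pi) * \<i>"
    by (simp add: z0_def algebra_simps)
  have ez0: "exp (of_real (2*pi) * z0) = -1"
    unfolding eqz by (rule exp_integer_2pi_plus1) simp
  define \<beta> where "\<beta> t = z0 + (Q t - Q 0) / of_real (2*pi)" for t
  have eb: "exp (of_real (2*pi) * \<beta> t) * (\<alpha> t - 1) = \<alpha> t + 1" if t: "t \<in> {0..1}" for t
  proof -
    have eqb: "of_real (2*pi) * \<beta> t = of_real (2*pi) * z0 + Q t - Q 0"
      by (simp add: \<beta>_def field_simps)
    have "exp (of_real (2*pi) * \<beta> t) = exp (of_real (2*pi) * z0) * exp (Q t) / exp (Q 0)"
      by (simp only: eqb exp_add exp_diff)
    also have "\<dots> = exp (Q t)" unfolding ez0 eQ0 by simp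
    finally have "exp (of_real (2*pi) * \<beta> t) = exp (Q t)" .
    then show ?thesis using expQ[OF t] by simp
  qed
  have ex: "is_lift \<alpha> z0 \<beta>"
    unfolding is_lift_def
  proof (intro conjI ballI)
    show "path \<beta>" unfolding path_def \<beta>_def using cQ by (intro continuous_intros) auto
    show "path_image \<beta> \<subseteq> - iZ"
    proof
      fix y assume "y \<in> path_image \<beta>"
      then obtain t where t: "t \<in> {0..1}" "y = \<beta> t" by (auto simp: path_image_def)
      show "y \<in> - iZ" using key2[OF eb[OF t(1)]] t(2) by simp
    qed
    show "pathstart \<beta> = z0" by (simp add: pathstart_def \<beta>_def)
    fix t :: real assume t: "t \<in> {0..1}"
    show "f1 (f2 (\<beta> t)) = \<alpha> t" using key[OF key2[OF eb[OF t]]] eb[OF t] by simp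
  qed
  have un: "pathfinish b = z0 + \<i> * (winding_number \<alpha> (-1) - winding_number \<alpha> 1) \<and>
       (\<forall>t\<in>{0..1}. (Re (b t) \<le> 0 \<longleftrightarrow> Re (\<alpha> t) \<le> 0) \<and> (Re (b t) = 0 \<longleftrightarrow> Re (\<alpha> t) = 0))"
    if b: "is_lift \<alpha> z0 b" for b
  proof -
    have bp: "path b" "path_image b \<subseteq> - iZ" "b 0 = z0" "\<And>t. t \<in> {0..1} \<Longrightarrow> f1 (f2 (b t)) = \<alpha> t"
      using b by (auto simp: is_lift_def pathstart_def)
    have nb: "b t \<notin> iZ" if "t \<in> {0..1}" for t
    proof -
      have "b t \<in> path_image b" using that by (simp add: path_image_def)
      then show ?thesis using bp(2) by blast
    qed
    have ebb: "exp (of_real (2*pi) * b t) * (\<alpha> t - 1) = \<alpha> t + 1" if t: "t \<in> {0..1}" for t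
      using key[OF nb[OF t], of "\<alpha> t"] bp(4)[OF t] by blast
    have "(\<lambda>t. of_real (2*pi) * b t) 1 - (\<lambda>t. of_real (2*pi) * b t) 0 = Q 1 - Q 0"
    proof (rule logc[OF _ cQ])
      show "continuous_on {0..1} (\<lambda>t. of_real (2*pi) * b t)" using bp(1) unfolding path_def
        by (intro continuous_intros)
      fix t :: real assume t: "t \<in> {0..1}"
      have "exp (of_real (2*pi) * b t) * (\<alpha> t - 1) = exp (Q t) * (\<alpha> t - 1)"
        using ebb[OF t] expQ[OF t] by simp
      then show "exp (of_real (2*pi) * b t) = exp (Q t)" using ane(2)[OF t] by simp
    qed
    then have "of_real (2*pi) * (b 1 - b 0) = 2 * of_real pi * \<i> * (winding_number \<alpha> (-1) - winding_number \<alpha> 1)"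
      using Qdiff by (simp add: algebra_simps)
    then have "of_real (2*pi) * (b 1 - b 0) = of_real (2*pi) * (\<i> * (winding_number \<alpha> (-1) - winding_number \<alpha> 1))"
      by (simp add: algebra_simps)
    then have "b 1 - b 0 = \<i> * (winding_number \<alpha> (-1) - winding_number \<alpha> 1)"
      by (simp only: mult_cancel_left) simp
    then have "pathfinish b = z0 + \<i> * (winding_number \<alpha> (-1) - winding_number \<alpha> 1)"
      using bp(3) by (simp add: pathfinish_def algebra_simps)
    moreover have "\<forall>t\<in>{0..1}. (Re (b t) \<le> 0 \<longleftrightarrow> Re (\<alpha> t) \<le> 0) \<and> (Re (b t) = 0 \<longleftrightarrow> Re (\<alpha> t) = 0)"
      using re_rel[OF ebb ane(1)] by blast
    ultimately show ?thesis by blast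
  qed
  show ?thesis using ex un unfolding z0_def by blast
qed

theorem proposition3:
  fixes \<alpha>1 \<alpha>2 :: "real \<Rightarrow> complex"
  assumes "admissible_rep \<alpha>1 loop_a1"
      and "admissible_rep \<alpha>2 loop_a2"
  shows
    "(\<exists>\<phi>. \<phi> holomorphic_on (- iZ) \<and> bij_betw \<phi> (- iZ) U_log \<and>
          inv_into (- iZ) \<phi> holomorphic_on U_log \<and>
          (\<forall>z\<in>- iZ. ulog_proj (\<phi> z) = f1 (f2 z)))
     \<and> covering_space (- iZ) (\<lambda>z. f1 (f2 z)) (- {-1, 1})
     \<and> (\<forall>k::int.
          (\<exists>\<beta>. is_lift \<alpha>1 (- \<i>/2 + \<i> * of_int k) \<beta>) \<and>
          (\<forall>\<beta>. is_lift \<alpha>1 (- \<i>/2 + \<i> * of_int k) \<beta> \<longrightarrow>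
               pathfinish \<beta> = - \<i>/2 + \<i> * of_int (k + 1) \<and>
               path_image \<beta> \<subseteq> {z. Re z \<le> 0} \<and>
               (\<forall>t\<in>{0..1}. Re (\<beta> t) = 0 \<longrightarrow> t = 0 \<or> t = 1)) \<and>
          (\<exists>\<beta>. is_lift \<alpha>2 (- \<i>/2 + \<i> * of_int k) \<beta>) \<and>
          (\<forall>\<beta>. is_lift \<alpha>2 (- \<i>/2 + \<i> * of_int k) \<beta> \<longrightarrow>
               pathfinish \<beta> = - \<i>/2 + \<i> * of_int (k - 1) \<and>
               path_image \<beta> \<subseteq> {z. Re z \<ge> 0} \<and>
               (\<forall>t\<in>{0..1}. Re (\<beta> t) = 0 \<longrightarrow> t = 0 \<or> t = 1)))"
proof -
  have a1: "path \<alpha>1" "pathstart \<alpha>1 = 0" "pathfinish \<alpha>1 = 0" "path_image \<alpha>1 \<subseteq> - {-1, 1}"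
      "homotopic_paths (- {-1, 1}) \<alpha>1 loop_a1"
      "\<forall>t\<in>{0..1}. (Re (\<alpha>1 t) = 0 \<or> (Im (\<alpha>1 t) = 0 \<and> -1 < Re (\<alpha>1 t) \<and> Re (\<alpha>1 t) < 1)) \<longrightarrow> t = 0 \<or> t = 1"
    using assms(1) unfolding admissible_rep_def by blast+
  have a2: "path \<alpha>2" "pathstart \<alpha>2 = 0" "pathfinish \<alpha>2 = 0" "path_image \<alpha>2 \<subseteq> - {-1, 1}"
      "homotopic_paths (- {-1, 1}) \<alpha>2 loop_a2"
      "\<forall>t\<in>{0..1}. (Re (\<alpha>2 t) = 0 \<or> (Im (\<alpha>2 t) = 0 \<and> -1 < Re (\<alpha>2 t) \<and> Re (\<alpha>2 t) < 1)) \<longrightarrow> t = 0 \<or> t = 1"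
    using assms(2) unfolding admissible_rep_def by blast+
  have s1: "\<alpha>1 0 = 0" "\<alpha>1 1 = 0" using a1(2,3) by (simp_all add: pathstart_def pathfinish_def)
  have s2: "\<alpha>2 0 = 0" "\<alpha>2 1 = 0" using a2(2,3) by (simp_all add: pathstart_def pathfinish_def)
  have sub1: "- {-1, 1} \<subseteq> - {-1::complex}" and sub2: "- {-1, 1} \<subseteq> - {1::complex}" by auto
  have w1: "winding_number \<alpha>1 (-1) = 1" "winding_number \<alpha>1 1 = 0"
    using winding_number_homotopic_paths[OF homotopic_paths_subset[OF a1(5) sub1]]
      winding_number_homotopic_paths[OF homotopic_paths_subset[OF a1(5) sub2]] wn_a1 by simp_all
  have w2: "winding_number \<alpha>2 (-1) = 0" "winding_number \<alpha>2 1 = 1"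
    using winding_number_homotopic_paths[OF homotopic_paths_subset[OF a2(5) sub1]]
      winding_number_homotopic_paths[OF homotopic_paths_subset[OF a2(5) sub2]] wn_a2 by simp_all
  have ax1: "Re (\<alpha>1 t) \<noteq> 0" if "t \<in> {0<..<1}" for t using a1(6) that by force
  have ax2: "Re (\<alpha>2 t) \<noteq> 0" if "t \<in> {0<..<1}" for t using a2(6) that by force
  have h1: "\<forall>t\<in>{0..1}. Re (\<alpha>1 t) \<le> 0"
    by (rule half_left[OF a1(1) s1 ax1, of "-1"]) (simp_all add: w1)
  have h2: "\<forall>t\<in>{0..1}. Re (\<alpha>2 t) \<ge> 0"
    by (rule half_right[OF a2(1) s2 ax2, of "1"]) (simp_all add: w2)
  show ?thesis
  proof (rule conjI[OF part1], rule conjI[OF cov_main], rule allI, intro conjI)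
    fix k :: int
    note L1 = lift_main[OF a1(1) s1(1) a1(4), of k]
    note L2 = lift_main[OF a2(1) s2(1) a2(4), of k]
    show "\<exists>\<beta>. is_lift \<alpha>1 (- \<i>/2 + \<i> * of_int k) \<beta>" using L1 by blast
    show "\<exists>\<beta>. is_lift \<alpha>2 (- \<i>/2 + \<i> * of_int k) \<beta>" using L2 by blast
    show "\<forall>\<beta>. is_lift \<alpha>1 (- \<i>/2 + \<i> * of_int k) \<beta> \<longrightarrow>
               pathfinish \<beta> = - \<i>/2 + \<i> * of_int (k + 1) \<and>
               path_image \<beta> \<subseteq> {z. Re z \<le> 0} \<and>
               (\<forall>t\<in>{0..1}. Re (\<beta> t) = 0 \<longrightarrow> t = 0 \<or> t = 1)"
    proof (intro allI impI conjI)
      fix \<beta> assume b: "is_lift \<alpha>1 (- \<i>/2 + \<i> * of_int k) \<beta>"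
      then have U: "pathfinish \<beta> = (- \<i>/2 + \<i> * of_int k) + \<i> * (winding_number \<alpha>1 (-1) - winding_number \<alpha>1 1)"
        "\<forall>t\<in>{0..1}. (Re (\<beta> t) \<le> 0 \<longleftrightarrow> Re (\<alpha>1 t) \<le> 0) \<and> (Re (\<beta> t) = 0 \<longleftrightarrow> Re (\<alpha>1 t) = 0)"
        using L1 by blast+
      show "pathfinish \<beta> = - \<i>/2 + \<i> * of_int (k + 1)" using U(1) w1 by (simp add: algebra_simps)
      show "path_image \<beta> \<subseteq> {z. Re z \<le> 0}" using U(2) h1 by (auto simp: path_image_def)
      show "\<forall>t\<in>{0..1}. Re (\<beta> t) = 0 \<longrightarrow> t = 0 \<or> t = 1" using U(2) a1(6) by blast
    qed
    show "\<forall>\<beta>. is_lift \<alpha>2 (- \<i>/2 + \<i> * of_int k) \<beta> \<longrightarrow>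
               pathfinish \<beta> = - \<i>/2 + \<i> * of_int (k - 1) \<and>
               path_image \<beta> \<subseteq> {z. Re z \<ge> 0} \<and>
               (\<forall>t\<in>{0..1}. Re (\<beta> t) = 0 \<longrightarrow> t = 0 \<or> t = 1)"
    proof (intro allI impI conjI)
      fix \<beta> assume b: "is_lift \<alpha>2 (- \<i>/2 + \<i> * of_int k) \<beta>"
      then have U: "pathfinish \<beta> = (- \<i>/2 + \<i> * of_int k) + \<i> * (winding_number \<alpha>2 (-1) - winding_number \<alpha>2 1)"
        "\<forall>t\<in>{0..1}. (Re (\<beta> t) \<le> 0 \<longleftrightarrow> Re (\<alpha>2 t) \<le> 0) \<and> (Re (\<beta> t) = 0 \<longleftrightarrow> Re (\<alpha>2 t) = 0)"
        using L2 by blast+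
      show "pathfinish \<beta> = - \<i>/2 + \<i> * of_int (k - 1)" using U(1) w2 by (simp add: algebra_simps)
      show "path_image \<beta> \<subseteq> {z. Re z \<ge> 0}"
      proof
        fix y assume "y \<in> path_image \<beta>"
        then obtain t where t: "t \<in> {0..1}" "y = \<beta> t" by (auto simp: path_image_def)
        have "Re (\<alpha>2 t) \<le> 0 \<longrightarrow> Re (\<alpha>2 t) = 0" using h2 t(1) by force
        then have "Re (\<beta> t) \<le> 0 \<longrightarrow> Re (\<beta> t) = 0" using U(2) t(1) by blast
        then show "y \<in> {z. Re z \<ge> 0}" using t(2) by force
      qed
      show "\<forall>t\<in>{0..1}. Re (\<beta> t) = 0 \<longrightarrow> t = 0 \<or> t = 1" using U(2) a2(6) by blast
    qed
  qed
qed

end
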